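(* For the single-choice constraint $\mathcal{F}=\{S\subseteq E:|S|\le1\}$, $\textsf{EoR}(\mathcal{F})=\textsf{PbM}(\mathcal{F})$.
   Context: Setting: $E$ is a finite ground set; each $e\in E$ has a nonnegative weight $w_e\sim D_e$, independently, $D=\times_e D_e$. Elements arrive one by one in a fixed order with their realized weights; an online algorithm (knowing $D$, possibly randomized) decides immediately and irrevocably upon each arrival whether to accept, keeping the accepted set in $\mathcal{F}$. $f(\boldsymbol{w})=\max_{S\in\mathcal{F}}\sum_{e\in S}w_e$ (here $=\max_e w_e$); $\boldsymbol{w}(\textsf{ALG}(\boldsymbol{w}))$ is the weight of the set selected by $\textsf{ALG}$. $\textsf{EoR}(\mathcal{F},D,\textsf{ALG})=\mathbf{E}[\boldsymbol{w}(\textsf{ALG}(\boldsymbol{w}))/f(\boldsymbol{w})]$, $\textsf{PbM}(\mathcal{F},D,\textsf{ALG})=\Pr[\boldsymbol{w}(\textsf{ALG}(\boldsymbol{w}))=f(\boldsymbol{w})]$; $\textsf{EoR}(\mathcal{F})=\inf_D\sup_{\textsf{ALG}}\textsf{EoR}(\mathcal{F},D,\textsf{ALG})$ and $\textsf{PbM}(\mathcal{F})=\inf_D\sup_{\textsf{ALG}}\textsf{PbM}(\mathcal{F},D,\textsf{ALG})$, the infima over product distributions. *)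

theory Defs
  imports "HOL-Probability.Probability"
begin

text \<open>Single-choice prophet setting. The ground set is E = {0..<n}, elements
arrive in the order 0, 1, ..., n-1. A weight vector is w :: nat \<Rightarrow> real
(only coordinates below n matter).\<close>

definition single_choice :: "nat \<Rightarrow> nat set set" where
  "single_choice n = {S. S \<subseteq> {..<n} \<and> card S \<le> 1}"

definition opt_val :: "nat \<Rightarrow> (nat \<Rightarrow> real) \<Rightarrow> real" where
  "opt_val n w = Max ((\<lambda>S. sum w S) ` single_choice n)"

definition weight_dists :: "nat \<Rightarrow> (nat \<Rightarrow> real measure) set" where
  "weight_dists n = {D. \<forall>e<n. prob_space (D e) \<and> sets (D e) = sets borel
                              \<and> (AE x in D e. 0 \<le> x)}"

text \<open>A r i w = True means: on arrival of element i, if nothing has been accepted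
yet, accept i.\<close>
definition online_algs :: "nat \<Rightarrow> (real \<Rightarrow> nat \<Rightarrow> (nat \<Rightarrow> real) \<Rightarrow> bool) set" where
  "online_algs n = {A.
     (\<forall>r i w w'. (\<forall>j\<le>i. w j = w' j) \<longrightarrow> A r i w = A r i w') \<and>
     (\<forall>i<n. (\<lambda>(r, w). A r i w) \<in> measurable (borel \<Otimes>\<^sub>M (PiM {..<n} (\<lambda>_. borel)))
                                          (count_space UNIV))}"

definition alg_set :: "nat \<Rightarrow> (real \<Rightarrow> nat \<Rightarrow> (nat \<Rightarrow> real) \<Rightarrow> bool) \<Rightarrow> real \<Rightarrow> (nat \<Rightarrow> real) \<Rightarrow> nat set" where
  "alg_set n A r w = (if \<exists>i<n. A r i w then {LEAST i. i < n \<and> A r i w} else {})"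

definition alg_val :: "nat \<Rightarrow> (real \<Rightarrow> nat \<Rightarrow> (nat \<Rightarrow> real) \<Rightarrow> bool) \<Rightarrow> real \<Rightarrow> (nat \<Rightarrow> real) \<Rightarrow> real" where
  "alg_val n A r w = sum w (alg_set n A r w)"

definition joint_space :: "nat \<Rightarrow> (nat \<Rightarrow> real measure) \<Rightarrow> (real \<times> (nat \<Rightarrow> real)) measure" where
  "joint_space n D = uniform_measure lborel {0..1} \<Otimes>\<^sub>M PiM {..<n} D"

text \<open>Ratio w(ALG)/f(w), with the convention 0/0 = 1 (when f(w) = 0 the
algorithm trivially attains the optimum).\<close>
definition ratio :: "real \<Rightarrow> real \<Rightarrow> real" where
  "ratio a b = (if b = 0 then 1 else a / b)"

definition EoR :: "nat \<Rightarrow> (nat \<Rightarrow> real measure) \<Rightarrow> (real \<Rightarrow> nat \<Rightarrow> (nat \<Rightarrow> real) \<Rightarrow> bool) \<Rightarrow> real" where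
  "EoR n D A = (\<integral>x. ratio (alg_val n A (fst x) (snd x)) (opt_val n (snd x)) \<partial>joint_space n D)"

definition PbM :: "nat \<Rightarrow> (nat \<Rightarrow> real measure) \<Rightarrow> (real \<Rightarrow> nat \<Rightarrow> (nat \<Rightarrow> real) \<Rightarrow> bool) \<Rightarrow> real" where
  "PbM n D A = measure (joint_space n D)
      {x \<in> space (joint_space n D). alg_val n A (fst x) (snd x) = opt_val n (snd x)}"

definition EoR_single :: "nat \<Rightarrow> real" where
  "EoR_single n = (INF D \<in> weight_dists n. SUP A \<in> online_algs n. EoR n D A)"

definition PbM_single :: "nat \<Rightarrow> real" where
  "PbM_single n = (INF D \<in> weight_dists n. SUP A \<in> online_algs n. PbM n D A)"

end

theory Submission
  imports Defs
begin

lemma single_choice_eq: "single_choice n = insert {} ((\<lambda>i. {i}) ` {..<n})"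
proof (intro set_eqI iffI)
  fix S assume "S \<in> single_choice n"
  then have S: "S \<subseteq> {..<n}" "card S \<le> 1" unfolding single_choice_def by auto
  have "finite S" using S(1) finite_subset by blast
  then show "S \<in> insert {} ((\<lambda>i. {i}) ` {..<n})"
    using S by (metis One_nat_def card_0_eq card_1_singletonE image_eqI insertCI insert_subset le_Suc_eq le_zero_eq lessThan_iff)
next
  fix S assume "S \<in> insert {} ((\<lambda>i. {i}) ` {..<n})"
  then show "S \<in> single_choice n" unfolding single_choice_def by auto
qed

lemma opt_val_eq: "opt_val n w = Max (insert 0 (w ` {..<n}))"
proof -
  have "(\<lambda>S. sum w S) ` single_choice n = insert 0 (w ` {..<n})"
    unfolding single_choice_eq by (auto simp: image_image)
  then show ?thesis unfolding opt_val_def by simp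
qed

lemma opt_val_ge0: "opt_val n w \<ge> 0" and opt_val_ge: "i < n \<Longrightarrow> w i \<le> opt_val n w"
  unfolding opt_val_eq by auto

lemma alg_set_cases:
  "(alg_set n A r w = {} \<and> \<not>(\<exists>i<n. A r i w)) \<or> (\<exists>i<n. alg_set n A r w = {i} \<and> A r i w \<and> (\<forall>j<i. \<not> A r j w))"
proof (cases "\<exists>i<n. A r i w")
  case True
  define i where "i = (LEAST i. i < n \<and> A r i w)"
  have "i < n \<and> A r i w" using True unfolding i_def by (metis (mono_tags, lifting) LeastI)
  moreover have "\<forall>j<i. \<not> A r j w" using i_def not_less_Least calculation by force
  ultimately show ?thesis using True unfolding alg_set_def i_def[symmetric] by auto
qed (auto simp: alg_set_def)

lemma alg_val_sum: "alg_val n A r w = (\<Sum>i<n. if A r i w \<and> (\<forall>j<i. \<not> A r j w) then w i else 0)"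
proof -
  from alg_set_cases[of n A r w] show ?thesis
  proof
    assume "alg_set n A r w = {} \<and> \<not>(\<exists>i<n. A r i w)" then show ?thesis
      by (auto simp: alg_val_def intro!: sum.neutral[symmetric])
  next
    assume "\<exists>i<n. alg_set n A r w = {i} \<and> A r i w \<and> (\<forall>j<i. \<not> A r j w)"
    then obtain i where i: "i<n" "alg_set n A r w = {i}" "A r i w" "\<forall>j<i. \<not> A r j w" by blast
    have "\<And>k. k < n \<Longrightarrow> (A r k w \<and> (\<forall>j<k. \<not> A r j w)) = (k = i)"
      using i by (metis linorder_neqE_nat)
    then have "(\<Sum>k<n. if A r k w \<and> (\<forall>j<k. \<not> A r j w) then w k else 0) = (\<Sum>k<n. if k = i then w k else 0)"
      by (intro sum.cong) auto
    also have "\<dots> = w i" using i by simp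
    finally show ?thesis using i by (simp add: alg_val_def)
  qed
qed

lemma online_cong:
  assumes "A \<in> online_algs n" "\<forall>j<n. w j = v j"
  shows "alg_set n A r w = alg_set n A r v" "alg_val n A r w = alg_val n A r v"
proof -
  have "\<And>i. i < n \<Longrightarrow> A r i w = A r i v" using assms unfolding online_algs_def by auto
  then have "(\<lambda>i. i < n \<and> A r i w) = (\<lambda>i. i < n \<and> A r i v)" by auto
  then show 1: "alg_set n A r w = alg_set n A r v" unfolding alg_set_def
    by (metis (no_types, lifting))
  show "alg_val n A r w = alg_val n A r v" unfolding alg_val_def 1
    using alg_set_cases[of n A r v] assms(2) by auto
qed

lemma opt_cong: "\<forall>j<n. w j = v j \<Longrightarrow> opt_val n w = opt_val n v"
  unfolding opt_val_eq by (metis image_cong lessThan_iff)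

abbreviation MS :: "nat \<Rightarrow> (real \<times> (nat \<Rightarrow> real)) measure" where
  "MS n \<equiv> borel \<Otimes>\<^sub>M PiM {..<n} (\<lambda>_. borel)"

lemma meas_alg:
  assumes "A \<in> online_algs n"
  shows "(\<lambda>x. alg_val n A (fst x) (snd x)) \<in> borel_measurable (MS n)"
proof -
  have A[measurable]: "\<And>i. i < n \<Longrightarrow> Measurable.pred (MS n) (\<lambda>x. A (fst x) i (snd x))"
    using assms unfolding online_algs_def pred_def by (auto simp: case_prod_beta')
  have [measurable]: "\<And>i. i < n \<Longrightarrow> (\<lambda>x. snd x i) \<in> borel_measurable (MS n)"
    by measurable
  show ?thesis unfolding alg_val_sum
    by measurable
qed

lemma meas_opt:
  shows "(\<lambda>x. opt_val n (snd x)) \<in> borel_measurable (MS n)"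
  unfolding opt_val_def
proof (rule borel_measurable_Max)
  show "finite (single_choice n)" unfolding single_choice_eq by auto
  fix S assume "S \<in> single_choice n"
  then have "S \<subseteq> {..<n}" unfolding single_choice_def by auto
  then show "(\<lambda>x. sum (snd x) S) \<in> borel_measurable (MS n)"
    by (intro borel_measurable_sum) (auto)
qed

lemma unif_prob: "prob_space (uniform_measure lborel {0..1::real})"
  by (rule prob_space_uniform_measure) auto

lemma sets_unif: "sets (uniform_measure lborel {0..1::real}) = sets borel"
  by simp

lemma wd_prob: "D \<in> weight_dists n \<Longrightarrow> i < n \<Longrightarrow> prob_space (D i)"
  and wd_sets: "D \<in> weight_dists n \<Longrightarrow> i < n \<Longrightarrow> sets (D i) = sets borel"
  and wd_AE: "D \<in> weight_dists n \<Longrightarrow> i < n \<Longrightarrow> AE x in D i. 0 \<le> x"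
  unfolding weight_dists_def by auto

lemma joint_prob: "D \<in> weight_dists n \<Longrightarrow> prob_space (joint_space n D)"
  unfolding joint_space_def
  by (intro prob_space_pair unif_prob prob_space_PiM) (auto dest: wd_prob)

lemma joint_sets: "D \<in> weight_dists n \<Longrightarrow> sets (joint_space n D) = sets (MS n)"
  unfolding joint_space_def
  by (intro sets_pair_measure_cong sets_PiM_cong) (auto dest: wd_sets)

lemma joint_space_eq: "D \<in> weight_dists n \<Longrightarrow> space (joint_space n D) = space (MS n)"
  using joint_sets sets_eq_imp_space_eq by blast

lemma joint_meas: "D \<in> weight_dists n \<Longrightarrow> f \<in> borel_measurable (MS n) \<Longrightarrow> f \<in> borel_measurable (joint_space n D)"
  using joint_sets measurable_cong_sets by blast

lemma joint_AE:
  assumes D: "D \<in> weight_dists n"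
  shows "AE x in joint_space n D. \<forall>j<n. 0 \<le> snd x j"
proof -
  interpret P: prob_space "PiM {..<n} D" by (intro prob_space_PiM) (auto dest: wd_prob[OF D])
  interpret U: prob_space "uniform_measure lborel {0..1::real}" by (rule unif_prob)
  interpret UP: pair_sigma_finite "uniform_measure lborel {0..1::real}" "PiM {..<n} D"
    by unfold_locales
  have comp: "AE w in PiM {..<n} D. 0 \<le> w j" if j: "j < n" for j
  proof -
    have eq: "distr (PiM {..<n} D) (D j) (\<lambda>w. w j) = D j"
      by (rule distr_PiM_component) (auto dest: wd_prob[OF D] simp: j)
    then have "AE x in distr (PiM {..<n} D) (D j) (\<lambda>w. w j). 0 \<le> x" using wd_AE[OF D j] by (subst eq)
    then show ?thesis
      using sets_eq_imp_space_eq[OF wd_sets[OF D j]]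
      by (subst (asm) AE_distr_iff) (auto simp: j wd_sets[OF D j])
  qed
  have "AE w in PiM {..<n} D. \<forall>j\<in>{..<n}. 0 \<le> w j"
    using comp by (intro AE_finite_allI) auto
  then have AEw: "AE w in PiM {..<n} D. \<forall>j<n. 0 \<le> w j" by (rule eventually_mono) auto
  have "{x\<in>space (MS n). \<forall>j<n. 0 \<le> snd x j} \<in> sets (MS n)"
    by measurable
  then have "{x\<in>space (joint_space n D). \<forall>j<n. 0 \<le> snd x j} \<in> sets (joint_space n D)"
    using joint_sets[OF D] joint_space_eq[OF D] by simp
  then have s2: "{x\<in>space (uniform_measure lborel {0..1::real} \<Otimes>\<^sub>M PiM {..<n} D). \<forall>j<n. 0 \<le> snd x j}
      \<in> sets (uniform_measure lborel {0..1::real} \<Otimes>\<^sub>M PiM {..<n} D)"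
    unfolding joint_space_def .
  show ?thesis
    unfolding joint_space_def
    apply (rule UP.AE_pair_measure[OF s2])
    apply (rule AE_I2)
    apply (rule eventually_mono[OF AEw])
    apply simp
    done
qed

lemma alg_val_cases:
  "alg_val n A r w = 0 \<or> (\<exists>i<n. alg_val n A r w = w i)"
  using alg_set_cases[of n A r w] unfolding alg_val_def by auto

lemma alg_le_opt: "alg_val n A r w \<le> opt_val n w"
  using alg_val_cases[of n A r w] opt_val_ge0[of n w] opt_val_ge[of _ n w] by auto

lemma alg_ge0: "\<forall>j<n. 0 \<le> w j \<Longrightarrow> 0 \<le> alg_val n A r w"
  using alg_val_cases[of n A r w] by auto

lemma ratio_le1: "ratio (alg_val n A r w) (opt_val n w) \<le> 1"
  using alg_le_opt[of n A r w] opt_val_ge0[of n w] unfolding ratio_def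
  by (auto simp: divide_le_eq_1)

lemma ratio_ge0: "\<forall>j<n. 0 \<le> w j \<Longrightarrow> 0 \<le> ratio (alg_val n A r w) (opt_val n w)"
  using alg_ge0[of n w A r] opt_val_ge0[of n w] unfolding ratio_def by auto

lemma ratio_eq1: "alg_val n A r w = opt_val n w \<Longrightarrow> ratio (alg_val n A r w) (opt_val n w) = 1"
  unfolding ratio_def by auto

lemma meas_R:
  assumes "A \<in> online_algs n"
  shows "(\<lambda>x. ratio (alg_val n A (fst x) (snd x)) (opt_val n (snd x))) \<in> borel_measurable (MS n)"
proof -
  note [measurable] = meas_alg[OF assms] meas_opt
  show ?thesis unfolding ratio_def by measurable
qed

lemma meas_S:
  assumes "A \<in> online_algs n"
  shows "{x\<in>space (MS n). alg_val n A (fst x) (snd x) = opt_val n (snd x)} \<in> sets (MS n)"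
proof -
  note [measurable] = meas_alg[OF assms] meas_opt
  show ?thesis by measurable
qed

lemma meas_S_joint:
  assumes "A \<in> online_algs n" "D \<in> weight_dists n"
  shows "{x\<in>space (joint_space n D). alg_val n A (fst x) (snd x) = opt_val n (snd x)} \<in> sets (joint_space n D)"
  using meas_S[OF assms(1)] joint_sets[OF assms(2)] joint_space_eq[OF assms(2)] by simp

lemma integrable_R:
  assumes A: "A \<in> online_algs n" and D: "D \<in> weight_dists n"
  shows "integrable (joint_space n D) (\<lambda>x. ratio (alg_val n A (fst x) (snd x)) (opt_val n (snd x)))"
proof -
  interpret J: prob_space "joint_space n D" by (rule joint_prob[OF D])
  show ?thesis
  proof (rule J.integrable_const_bound[where B=1])
    show "AE x in joint_space n D. norm (ratio (alg_val n A (fst x) (snd x)) (opt_val n (snd x))) \<le> 1"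
      using joint_AE[OF D] by (rule eventually_mono) (use ratio_le1 ratio_ge0 in auto)
    show "(\<lambda>x. ratio (alg_val n A (fst x) (snd x)) (opt_val n (snd x))) \<in> borel_measurable (joint_space n D)"
      by (rule joint_meas[OF D meas_R[OF A]])
  qed
qed

lemma EoR_le1:
  assumes A: "A \<in> online_algs n" and D: "D \<in> weight_dists n"
  shows "EoR n D A \<le> 1"
proof -
  interpret J: prob_space "joint_space n D" by (rule joint_prob[OF D])
  have "EoR n D A \<le> integral\<^sup>L (joint_space n D) (\<lambda>_. 1)"
    unfolding EoR_def by (intro integral_mono integrable_R[OF A D]) (auto simp: ratio_le1)
  then show ?thesis using J.prob_space by simp
qed

lemma PbM_le1: "D \<in> weight_dists n \<Longrightarrow> PbM n D A \<le> 1"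
  unfolding PbM_def using prob_space.prob_le_1[OF joint_prob] by blast

lemma PbM_ge0: "0 \<le> PbM n D A"
  unfolding PbM_def by simp

lemma PbM_le_EoR:
  assumes A: "A \<in> online_algs n" and D: "D \<in> weight_dists n"
  shows "PbM n D A \<le> EoR n D A"
proof -
  interpret J: prob_space "joint_space n D" by (rule joint_prob[OF D])
  let ?S = "{x\<in>space (joint_space n D). alg_val n A (fst x) (snd x) = opt_val n (snd x)}"
  have "PbM n D A = integral\<^sup>L (joint_space n D) (indicator ?S)"
    unfolding PbM_def by (simp add: Int_absorb2)
  also have "\<dots> \<le> EoR n D A" unfolding EoR_def
  proof (rule integral_mono_AE)
    show "integrable (joint_space n D) (indicator ?S :: _ \<Rightarrow> real)"
      using meas_S_joint[OF A D] by (intro integrable_real_indicator) (auto simp: J.emeasure_space_1 less_top[symmetric])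
    show "integrable (joint_space n D) (\<lambda>x. ratio (alg_val n A (fst x) (snd x)) (opt_val n (snd x)))"
      by (rule integrable_R[OF A D])
    show "AE x in joint_space n D. indicator ?S x \<le> ratio (alg_val n A (fst x) (snd x)) (opt_val n (snd x))"
      using joint_AE[OF D] by (rule eventually_mono) (auto simp: indicator_def ratio_def intro!: divide_nonneg_nonneg alg_ge0 opt_val_ge0)
  qed
  finally show ?thesis .
qed

lemma zero_alg: "(\<lambda>r i w. False) \<in> online_algs n"
  unfolding online_algs_def by auto

lemma EoR_zero_ge0: "0 \<le> EoR n D (\<lambda>r i w. False)"
  unfolding EoR_def by (rule Bochner_Integration.integral_nonneg) (auto simp: ratio_def alg_val_def alg_set_def)

definition Bt :: "real \<Rightarrow> (real \<Rightarrow> nat \<Rightarrow> (nat \<Rightarrow> real) \<Rightarrow> bool) \<Rightarrow> real \<Rightarrow> nat \<Rightarrow> (nat \<Rightarrow> real) \<Rightarrow> bool" where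
  "Bt K A r i w = A r i (\<lambda>j. exp (K * w j))"

lemma alg_set_Bt: "alg_set n (Bt K A) r w = alg_set n A r (\<lambda>j. exp (K * w j))"
  unfolding alg_set_def Bt_def ..

lemma opt_val_pos: "0 < n \<Longrightarrow> 0 < opt_val n (\<lambda>j. exp (K * w j))"
  using opt_val_ge[of 0 n "\<lambda>j. exp (K * w j)"] exp_gt_zero[of "K * w 0"] by linarith

lemma opt_val_max: "0 < n \<Longrightarrow> \<exists>m<n. opt_val n w = max 0 (w m) \<and> (\<forall>j<n. w j \<le> w m)"
proof -
  assume n: "0 < n"
  have fin: "finite (w ` {..<n})" and ne: "w ` {..<n} \<noteq> {}" using n by auto
  have "Max (w ` {..<n}) \<in> w ` {..<n}" using Max_in[OF fin ne] .
  then obtain m where m: "m < n" "Max (w ` {..<n}) = w m" by blast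
  have le: "\<forall>j<n. w j \<le> w m" using m(2) Max_ge[OF fin] by (metis image_eqI lessThan_iff)
  have "opt_val n w = max 0 (Max (w ` {..<n}))" unfolding opt_val_eq using Max_insert[OF fin ne] by simp
  then show ?thesis using m le by auto
qed

lemma pointwise:
  assumes w: "\<forall>j<n. 0 \<le> w j" and K: "0 < K" and d: "0 < \<delta>"
  shows "ratio (alg_val n A r (\<lambda>j. exp (K * w j))) (opt_val n (\<lambda>j. exp (K * w j)))
     \<le> (if alg_val n (Bt K A) r w = opt_val n w then 1 else 0) + exp (-(K*\<delta>))
       + (if \<exists>a<n. \<exists>b<n. 0 < w b - w a \<and> w b - w a < \<delta> then 1 else 0)"
    (is "?L \<le> ?I + ?E + ?N")
proof -
  let ?w' = "\<lambda>j. exp (K * w j)"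
  have I0: "0 \<le> ?I" and N0: "0 \<le> ?N" and E0: "0 \<le> ?E" by auto
  have L1: "?L \<le> 1" by (rule ratio_le1)
  show ?thesis
  proof (cases "n = 0")
    case True
    then have "alg_val n (Bt K A) r w = opt_val n w"
      by (simp add: alg_val_def alg_set_def opt_val_eq)
    then have "?I = 1" by simp
    then show ?thesis using L1 N0 E0 by linarith
  next
    case False
    then have n: "0 < n" by simp
    have op: "0 < opt_val n ?w'" by (rule opt_val_pos[OF n])
    obtain m where m: "m < n" "opt_val n w = max 0 (w m)" "\<forall>j<n. w j \<le> w m"
      using opt_val_max[OF n] by blast
    have wm: "opt_val n w = w m" using m w by auto
    have opm: "exp (K * w m) \<le> opt_val n ?w'" using opt_val_ge[OF m(1)] .
    from alg_set_cases[of n A r ?w'] show ?thesis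
    proof
      assume "alg_set n A r ?w' = {} \<and> \<not>(\<exists>i<n. A r i ?w')"
      then have "alg_val n A r ?w' = 0" by (simp add: alg_val_def)
      then have "?L = 0" using op by (simp add: ratio_def)
      then show ?thesis using I0 N0 E0 by linarith
    next
      assume "\<exists>i<n. alg_set n A r ?w' = {i} \<and> A r i ?w' \<and> (\<forall>j<i. \<not> A r j ?w')"
      then obtain i where i: "i < n" "alg_set n A r ?w' = {i}" by blast
      have av: "alg_val n A r ?w' = exp (K * w i)" using i by (simp add: alg_val_def)
      have bv: "alg_val n (Bt K A) r w = w i" using i by (simp add: alg_val_def alg_set_Bt)
      have Lv: "?L = exp (K * w i) / opt_val n ?w'" using av op by (simp add: ratio_def)
      consider "w i = w m" | "w m - w i < \<delta>" "w i \<noteq> w m" | "\<delta> \<le> w m - w i" by linarith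
      then show ?thesis
      proof cases
        case 1
        then have "?I = 1" using bv wm by simp
        then show ?thesis using L1 N0 E0 by linarith
      next
        case 2
        have "w i \<le> w m" using m(3) i(1) by blast
        then have "w i < w m" using 2 by linarith
        then have "\<exists>a<n. \<exists>b<n. 0 < w b - w a \<and> w b - w a < \<delta>" 
        proof -
          have "0 < w m - w i" "w m - w i < \<delta>" using \<open>w i < w m\<close> 2 by auto
          then show ?thesis using i(1) m(1) by blast
        qed
        then have "?N = 1" by (simp only: if_True)
        then show ?thesis using L1 I0 E0 by linarith
      next
        case 3
        have "?L \<le> exp (K * w i) / exp (K * w m)"
          unfolding Lv by (rule divide_left_mono[OF opm]) (auto intro!: mult_pos_pos op)
        also have "\<dots> = exp (K * w i - K * w m)" by (simp add: exp_diff)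
        also have "\<dots> \<le> ?E"
        proof -
          have "K*\<delta> \<le> K*(w m - w i)" using 3 K by (intro mult_left_mono) auto
          then have "K*w i - K*w m \<le> -(K*\<delta>)" by (simp add: algebra_simps)
          then show ?thesis by simp
        qed
        finally show ?thesis using I0 N0 by linarith
      qed
    qed
  qed
qed

definition Dt :: "real \<Rightarrow> (nat \<Rightarrow> real measure) \<Rightarrow> nat \<Rightarrow> real measure" where
  "Dt K D = (\<lambda>i. distr (D i) borel (\<lambda>x. exp (K * x)))"

lemma Dt_wd:
  assumes D: "D \<in> weight_dists n"
  shows "Dt K D \<in> weight_dists n"
  unfolding weight_dists_def
proof (intro CollectI allI impI conjI)
  fix i assume i: "i < n"
  have m: "(\<lambda>x. exp (K * x)) \<in> measurable (D i) borel"
    by (subst measurable_cong_sets[OF wd_sets[OF D i] refl]) measurable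
  show "prob_space (Dt K D i)" unfolding Dt_def
    by (rule prob_space.prob_space_distr[OF wd_prob[OF D i] m])
  show "sets (Dt K D i) = sets borel" unfolding Dt_def by simp
  show "AE x in Dt K D i. 0 \<le> x" unfolding Dt_def
    by (subst AE_distr_iff[OF m]) auto
qed

lemma Bt_online:
  assumes A: "A \<in> online_algs n"
  shows "Bt K A \<in> online_algs n"
  unfolding online_algs_def
proof (intro CollectI conjI allI impI)
  have onl: "\<forall>r i w w'. (\<forall>j\<le>i. w j = w' j) \<longrightarrow> A r i w = A r i w'"
    using A unfolding online_algs_def by blast
  fix r and i :: nat and w w' assume a: "\<forall>j\<le>i. w j = (w' j :: real)"
  show "Bt K A r i w = Bt K A r i w'"
    unfolding Bt_def by (rule onl[rule_format]) (simp add: a)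
next
  fix i assume i: "i < n"
  have Ai: "(\<lambda>(r, w). A r i w) \<in> measurable (MS n) (count_space UNIV)"
    using A i unfolding online_algs_def by auto
  have T: "(\<lambda>x. (fst x, restrict (\<lambda>j. exp (K * snd x j)) {..<n})) \<in> measurable (MS n) (MS n)"
    by measurable
  have "(\<lambda>x. (\<lambda>(r, w). A r i w) (fst x, restrict (\<lambda>j. exp (K * snd x j)) {..<n})) \<in> measurable (MS n) (count_space UNIV)"
    using measurable_comp[OF T Ai] by (simp add: comp_def)
  moreover have "\<And>x. (\<lambda>(r, w). A r i w) (fst x, restrict (\<lambda>j. exp (K * snd x j)) {..<n}) = (\<lambda>(r, w). Bt K A r i w) x"
  proof -
    fix x :: "real \<times> (nat \<Rightarrow> real)"
    have onl: "\<forall>r i w w'. (\<forall>j\<le>i. w j = w' j) \<longrightarrow> A r i w = A r i w'"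
      using A unfolding online_algs_def by blast
    have "A (fst x) i (restrict (\<lambda>j. exp (K * snd x j)) {..<n}) = A (fst x) i (\<lambda>j. exp (K * snd x j))"
      by (rule onl[rule_format]) (use i in auto)
    then show "(\<lambda>(r, w). A r i w) (fst x, restrict (\<lambda>j. exp (K * snd x j)) {..<n}) = (\<lambda>(r, w). Bt K A r i w) x"
      by (simp add: Bt_def case_prod_beta')
  qed
  ultimately show "(\<lambda>(r, w). Bt K A r i w) \<in> measurable (MS n) (count_space UNIV)" by simp
qed

lemma PiM_Dt:
  assumes D: "D \<in> weight_dists n"
  shows "PiM {..<n} (Dt K D) = distr (PiM {..<n} D) (PiM {..<n} (Dt K D)) (\<lambda>w. restrict (\<lambda>j. exp (K * w j)) {..<n})"
proof -
  have D': "Dt K D \<in> weight_dists n" by (rule Dt_wd[OF D])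
  have m: "(\<lambda>x. exp (K * x)) \<in> measurable (D i) (Dt K D i)" if i: "i \<in> {..<n}" for i
    using i by (subst measurable_cong_sets[OF wd_sets[OF D] wd_sets[OF D']]) (auto)
  have "distr (PiM {..<n} D) (PiM {..<n} (Dt K D)) (compose {..<n} (\<lambda>x. exp (K * x)))
        = PiM {..<n} (\<lambda>i. distr (D i) (Dt K D i) (\<lambda>x. exp (K * x)))"
    by (rule distr_PiM_finite_prob_space') (auto intro: wd_prob[OF D] wd_prob[OF D'] m)
  also have "\<dots> = PiM {..<n} (Dt K D)"
  proof (rule PiM_cong[OF refl])
    fix i assume "i \<in> {..<n}"
    then show "distr (D i) (Dt K D i) (\<lambda>x. exp (K * x)) = Dt K D i"
      unfolding Dt_def by (intro distr_cong) auto
  qed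
  moreover have "compose {..<n} (\<lambda>x. exp (K * x)) = (\<lambda>w. restrict (\<lambda>j. exp (K * w j)) {..<n})"
    by (rule ext) (simp add: compose_def)
  ultimately show ?thesis by simp
qed

lemma joint_Dt:
  assumes D: "D \<in> weight_dists n"
  shows "joint_space n (Dt K D) = distr (joint_space n D) (joint_space n (Dt K D))
           (\<lambda>x. (fst x, restrict (\<lambda>j. exp (K * snd x j)) {..<n}))"
proof -
  have D': "Dt K D \<in> weight_dists n" by (rule Dt_wd[OF D])
  let ?U = "uniform_measure lborel {0..1::real}"
  let ?h = "\<lambda>w. restrict (\<lambda>j. exp (K * w j)) {..<n}"
  have hm: "?h \<in> measurable (PiM {..<n} D) (PiM {..<n} (Dt K D))"
  proof -
    have "?h \<in> measurable (PiM {..<n} (\<lambda>_. borel)) (PiM {..<n} (\<lambda>_. borel))" by measurable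
    then show ?thesis
      by (subst measurable_cong_sets[OF sets_PiM_cong sets_PiM_cong, of _ _ _ "\<lambda>_. borel" _ _ _ "\<lambda>_. borel"])
         (auto simp: wd_sets[OF D] wd_sets[OF D'])
  qed
  have sf: "sigma_finite_measure (distr (PiM {..<n} D) (PiM {..<n} (Dt K D)) ?h)"
    unfolding PiM_Dt[OF D, symmetric]
    by (intro prob_space_imp_sigma_finite prob_space_PiM) (auto intro: wd_prob[OF D'])
  have "joint_space n (Dt K D) = distr ?U ?U id \<Otimes>\<^sub>M distr (PiM {..<n} D) (PiM {..<n} (Dt K D)) ?h"
    unfolding joint_space_def PiM_Dt[OF D, symmetric] using distr_id[of ?U] by (simp add: id_def)
  also have "\<dots> = distr (?U \<Otimes>\<^sub>M PiM {..<n} D) (?U \<Otimes>\<^sub>M PiM {..<n} (Dt K D)) (\<lambda>(x, y). (id x, ?h y))"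
    by (rule pair_measure_distr[OF _ hm sf]) (simp add: id_def)
  also have "\<dots> = distr (joint_space n D) (joint_space n (Dt K D)) (\<lambda>x. (fst x, ?h (snd x)))"
    unfolding joint_space_def by (simp add: case_prod_beta')
  finally show ?thesis .
qed

definition Nset :: "nat \<Rightarrow> (nat \<Rightarrow> real measure) \<Rightarrow> real \<Rightarrow> (real \<times> (nat \<Rightarrow> real)) set" where
  "Nset n D \<delta> = {x\<in>space (joint_space n D). \<exists>a<n. \<exists>b<n. 0 < snd x b - snd x a \<and> snd x b - snd x a < \<delta>}"

lemma Nset_sets: "D \<in> weight_dists n \<Longrightarrow> Nset n D \<delta> \<in> sets (joint_space n D)"
proof -
  assume D: "D \<in> weight_dists n"
  have "{x\<in>space (MS n). \<exists>a<n. \<exists>b<n. 0 < snd x b - snd x a \<and> snd x b - snd x a < \<delta>} \<in> sets (MS n)"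
    by measurable
  then show ?thesis unfolding Nset_def using joint_sets[OF D] joint_space_eq[OF D] by simp
qed

lemma EoR_bound:
  assumes A: "A \<in> online_algs n" and D: "D \<in> weight_dists n" and K: "0 < K" and d: "0 < \<delta>"
  shows "EoR n (Dt K D) A \<le> PbM n D (Bt K A) + exp (-(K*\<delta>)) + measure (joint_space n D) (Nset n D \<delta>)"
proof -
  let ?J = "joint_space n D"
  let ?J' = "joint_space n (Dt K D)"
  let ?T = "\<lambda>x::real \<times> (nat \<Rightarrow> real). (fst x, restrict (\<lambda>j. exp (K * snd x j)) {..<n})"
  let ?R = "\<lambda>x. ratio (alg_val n A (fst x) (snd x)) (opt_val n (snd x))"
  let ?S = "{x\<in>space ?J. alg_val n (Bt K A) (fst x) (snd x) = opt_val n (snd x)}"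
  let ?N = "Nset n D \<delta>"
  have D': "Dt K D \<in> weight_dists n" by (rule Dt_wd[OF D])
  interpret J: prob_space ?J by (rule joint_prob[OF D])
  have Tm: "?T \<in> measurable ?J ?J'"
  proof -
    have "?T \<in> measurable (MS n) (MS n)" by measurable
    then show ?thesis using measurable_cong_sets[OF joint_sets[OF D] joint_sets[OF D']] by simp
  qed
  have Rm: "?R \<in> borel_measurable ?J'" by (rule joint_meas[OF D' meas_R[OF A]])
  have "EoR n (Dt K D) A = integral\<^sup>L (distr ?J ?J' ?T) ?R"
    unfolding EoR_def by (subst joint_Dt[OF D]) (rule refl)
  also have "\<dots> = integral\<^sup>L ?J (\<lambda>x. ?R (?T x))"
    by (rule integral_distr[OF Tm Rm])
  also have "\<dots> \<le> integral\<^sup>L ?J (\<lambda>x. indicator ?S x + exp (-(K*\<delta>)) + indicator ?N x)"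
  proof (rule integral_mono_AE)
    have "integrable ?J' ?R" by (rule integrable_R[OF A D'])
    then show "integrable ?J (\<lambda>x. ?R (?T x))"
      using joint_Dt[OF D, of K] integrable_distr_eq[OF Tm Rm] by simp
    have Sm: "?S \<in> sets ?J" by (rule meas_S_joint[OF Bt_online[OF A] D])
    have Nm: "?N \<in> sets ?J" by (rule Nset_sets[OF D])
    show "integrable ?J (\<lambda>x. indicator ?S x + exp (-(K*\<delta>)) + indicator ?N x :: real)"
      using Sm Nm by (intro Bochner_Integration.integrable_add integrable_real_indicator) (auto simp: J.emeasure_space_1 less_top[symmetric])
    show "AE x in ?J. ?R (?T x) \<le> indicator ?S x + exp (-(K*\<delta>)) + indicator ?N x"
      using eventually_conj[OF AE_space joint_AE[OF D]]
    proof (rule eventually_mono)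
      fix x assume x: "x \<in> space ?J \<and> (\<forall>j<n. 0 \<le> snd x j)"
      have e1: "alg_val n A (fst x) (restrict (\<lambda>j. exp (K * snd x j)) {..<n}) = alg_val n A (fst x) (\<lambda>j. exp (K * snd x j))"
        by (rule online_cong(2)[OF A]) simp
      have e2: "opt_val n (restrict (\<lambda>j. exp (K * snd x j)) {..<n}) = opt_val n (\<lambda>j. exp (K * snd x j))"
        by (rule opt_cong) simp
      have "?R (?T x) = ratio (alg_val n A (fst x) (\<lambda>j. exp (K * snd x j))) (opt_val n (\<lambda>j. exp (K * snd x j)))"
        using e1 e2 by simp
      also have "\<dots> \<le> (if alg_val n (Bt K A) (fst x) (snd x) = opt_val n (snd x) then 1 else 0) + exp (-(K*\<delta>))
       + (if \<exists>a<n. \<exists>b<n. 0 < snd x b - snd x a \<and> snd x b - snd x a < \<delta> then 1 else 0)"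
        by (rule pointwise) (use x K d in auto)
      also have "\<dots> = indicator ?S x + exp (-(K*\<delta>)) + indicator ?N x"
        using x by (simp add: indicator_def Nset_def)
      finally show "?R (?T x) \<le> indicator ?S x + exp (-(K*\<delta>)) + indicator ?N x" .
    qed
  qed
  also have "\<dots> = measure ?J ?S + exp (-(K*\<delta>)) + measure ?J ?N"
  proof -
    have Sm: "?S \<in> sets ?J" by (rule meas_S_joint[OF Bt_online[OF A] D])
    have Nm: "?N \<in> sets ?J" by (rule Nset_sets[OF D])
    have i1: "integrable ?J (indicator ?S :: _ \<Rightarrow> real)" "integrable ?J (indicator ?N :: _ \<Rightarrow> real)"
      using Sm Nm by (auto intro!: integrable_real_indicator simp: J.emeasure_space_1 less_top[symmetric])
    have "integral\<^sup>L ?J (\<lambda>x. indicator ?S x + exp (-(K*\<delta>)) + indicator ?N x)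
        = integral\<^sup>L ?J (indicator ?S) + integral\<^sup>L ?J (\<lambda>x. exp (-(K*\<delta>))) + integral\<^sup>L ?J (indicator ?N)"
      using i1 by (simp add: Bochner_Integration.integral_add)
    also have "\<dots> = measure ?J ?S + exp (-(K*\<delta>)) + measure ?J ?N"
      using Sm Nm J.prob_space by (simp add: Int_absorb2 sets.sets_into_space)
    finally show ?thesis .
  qed
  also have "\<dots> = PbM n D (Bt K A) + exp (-(K*\<delta>)) + measure ?J ?N"
    unfolding PbM_def ..
  finally show ?thesis .
qed

lemma Nset_mono: "\<delta> \<le> \<delta>' \<Longrightarrow> Nset n D \<delta> \<subseteq> Nset n D \<delta>'"
  unfolding Nset_def by fastforce

lemma Nset_small:
  assumes D: "D \<in> weight_dists n" and e: "0 < \<epsilon>"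
  shows "\<exists>\<delta>>0. measure (joint_space n D) (Nset n D \<delta>) < \<epsilon>"
proof -
  interpret J: prob_space "joint_space n D" by (rule joint_prob[OF D])
  let ?N = "\<lambda>m::nat. Nset n D (1 / Suc m)"
  have dec: "decseq ?N"
    by (intro decseq_SucI Nset_mono) (simp add: frac_le)
  have rng: "range ?N \<subseteq> sets (joint_space n D)" using Nset_sets[OF D] by auto
  have empty: "(\<Inter>m. ?N m) = {}"
  proof (rule ccontr)
    assume "(\<Inter>m. ?N m) \<noteq> {}"
    then obtain x where x: "\<And>m. x \<in> ?N m" by blast
    let ?G = "{d. \<exists>a<n. \<exists>b<n. d = snd x b - snd x a \<and> 0 < d}"
    have fin: "finite ?G"
    proof (rule finite_subset)
      show "?G \<subseteq> (\<lambda>(a, b). snd x b - snd x a) ` ({..<n} \<times> {..<n})" by force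
    qed auto
    from x[of 0] have ne: "?G \<noteq> {}" unfolding Nset_def by auto
    have pos: "0 < Min ?G" using Min_in[OF fin ne] by auto
    obtain m :: nat where m: "inverse (real (Suc m)) < Min ?G" using reals_Archimedean[OF pos] by blast
    from x[of m] obtain a b where ab: "a < n" "b < n" "0 < snd x b - snd x a" "snd x b - snd x a < 1 / Suc m"
      unfolding Nset_def by auto
    then have "snd x b - snd x a \<in> ?G" by blast
    then have "Min ?G \<le> snd x b - snd x a" using Min_le[OF fin] by blast
    then show False using ab(4) m by (simp add: inverse_eq_divide)
  qed
  have "(\<lambda>m. measure (joint_space n D) (?N m)) \<longlonglongrightarrow> measure (joint_space n D) (\<Inter>m. ?N m)"
    by (rule J.finite_Lim_measure_decseq[OF rng dec])
  then have "(\<lambda>m. measure (joint_space n D) (?N m)) \<longlonglongrightarrow> 0" using empty by simp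
  then have "eventually (\<lambda>m. measure (joint_space n D) (?N m) < \<epsilon>) sequentially"
    using e by (rule order_tendstoD)
  then obtain m where "measure (joint_space n D) (?N m) < \<epsilon>" by (meson eventually_sequentially order_refl)
  then show ?thesis by (intro exI[of _ "1 / Suc m"]) auto
qed

lemma exp_small: "0 < \<delta> \<Longrightarrow> 0 < \<epsilon> \<Longrightarrow> \<exists>K>0. exp (-(K*\<delta>)) < (\<epsilon>::real)"
proof -
  assume d: "0 < \<delta>" and e: "0 < \<epsilon>"
  define K where "K = (\<bar>ln \<epsilon>\<bar> + 1) / \<delta>"
  have K: "0 < K" unfolding K_def using d by auto
  have "K * \<delta> = \<bar>ln \<epsilon>\<bar> + 1" unfolding K_def using d by simp
  then have "-(K*\<delta>) < ln \<epsilon>" by linarith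
  then have "exp (-(K*\<delta>)) < exp (ln \<epsilon>)" by simp
  then show ?thesis using K e by auto
qed

lemma W_ne: "weight_dists n \<noteq> {}"
proof -
  have "(\<lambda>_. return borel (0::real)) \<in> weight_dists n"
    unfolding weight_dists_def by (auto intro!: prob_space_return simp: AE_return)
  then show ?thesis by blast
qed

lemma O_ne: "online_algs n \<noteq> {}" using zero_alg by blast

lemma bddE: "D \<in> weight_dists n \<Longrightarrow> bdd_above (EoR n D ` online_algs n)"
  by (rule bdd_aboveI[of _ 1]) (auto intro: EoR_le1)

lemma bddP: "D \<in> weight_dists n \<Longrightarrow> bdd_above (PbM n D ` online_algs n)"
  by (rule bdd_aboveI[of _ 1]) (auto intro: PbM_le1)

lemma fE_ge0: "D \<in> weight_dists n \<Longrightarrow> 0 \<le> (SUP A \<in> online_algs n. EoR n D A)"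
  by (rule cSUP_upper2[OF bddE zero_alg]) (auto intro: EoR_zero_ge0)

lemma fP_ge0: "D \<in> weight_dists n \<Longrightarrow> 0 \<le> (SUP A \<in> online_algs n. PbM n D A)"
  by (rule cSUP_upper2[OF bddP zero_alg]) (auto intro: PbM_ge0)

theorem proposition3:
  fixes n :: nat
  shows "EoR_single n = PbM_single n"
proof (rule antisym)
  let ?fE = "\<lambda>D. SUP A \<in> online_algs n. EoR n D A"
  let ?fP = "\<lambda>D. SUP A \<in> online_algs n. PbM n D A"
  have bbE: "bdd_below (?fE ` weight_dists n)" by (rule bdd_belowI[of _ 0]) (auto intro: fE_ge0)
  have bbP: "bdd_below (?fP ` weight_dists n)" by (rule bdd_belowI[of _ 0]) (auto intro: fP_ge0)
  show "PbM_single n \<le> EoR_single n"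
    unfolding PbM_single_def EoR_single_def
  proof (rule cINF_mono[OF W_ne bbP])
    fix D assume D: "D \<in> weight_dists n"
    have "?fP D \<le> ?fE D"
      by (rule cSUP_mono[OF O_ne bddE[OF D]]) (use PbM_le_EoR D in blast)
    then show "\<exists>D'\<in>weight_dists n. ?fP D' \<le> ?fE D" using D by blast
  qed
  show "EoR_single n \<le> PbM_single n"
    unfolding PbM_single_def EoR_single_def
  proof (rule cINF_greatest[OF W_ne])
    fix D assume D: "D \<in> weight_dists n"
    show "(INF D \<in> weight_dists n. ?fE D) \<le> ?fP D"
    proof (rule field_le_epsilon)
      fix e :: real assume e: "0 < e"
      obtain \<delta> where d: "0 < \<delta>" "measure (joint_space n D) (Nset n D \<delta>) < e/2"
        using Nset_small[OF D, of "e/2"] e by auto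
      obtain K where K: "0 < K" "exp (-(K*\<delta>)) < e/2"
        using exp_small[OF d(1), of "e/2"] e by auto
      have "(INF D \<in> weight_dists n. ?fE D) \<le> ?fE (Dt K D)"
        by (rule cINF_lower[OF bbE Dt_wd[OF D]])
      also have "\<dots> \<le> ?fP D + e"
      proof (rule cSUP_least[OF O_ne])
        fix A assume A: "A \<in> online_algs n"
        have "EoR n (Dt K D) A \<le> PbM n D (Bt K A) + exp (-(K*\<delta>)) + measure (joint_space n D) (Nset n D \<delta>)"
          by (rule EoR_bound[OF A D K(1) d(1)])
        moreover have "PbM n D (Bt K A) \<le> ?fP D"
          by (rule cSUP_upper[OF Bt_online[OF A] bddP[OF D]])
        ultimately show "EoR n (Dt K D) A \<le> ?fP D + e" using K(2) d(2) by linarith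
      qed
      finally show "(INF D \<in> weight_dists n. ?fE D) \<le> ?fP D + e" .
    qed
  qed
qed

end
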